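(* The class of data languages accepted by SAFA is not closed under inverse homomorphism: there exist a data language $L\subseteq(\Sigma\times D)^*$ accepted by some SAFA and a homomorphism $h:(\Sigma\times D)^*\to(\Sigma\times D)^*$ such that no SAFA accepts $h^{-1}(L)=\{w: h(w)\in L\}$.
   Context: $D$ is a fixed countably infinite set of data values; for a finite alphabet $\Sigma$, data words are elements of $(\Sigma\times D)^*$. A homomorphism of data words is a monoid homomorphism $h:(\Sigma\times D)^*\to(\Sigma\times D)^*$ ($h(\varepsilon)=\varepsilon$, $h(uv)=h(u)h(v)$), determined by the images of single letters (which may be the empty word). A set augmented finite automaton (SAFA) is a tuple $M=(Q,\Sigma\times D,q_0,F,H,\delta)$: $Q$ finite set of states, $q_0\in Q$ initial, $F\subseteq Q$ final, $H=\{h_1,\dots,h_m\}$ a finite collection of (names of) sets of data values, $\delta\subseteq Q\times\Sigma\times C\times OP\times Q$ with $C=\{p(h_i),\,!p(h_i)\}$, $OP=\{-\}\cup\{\mathsf{ins}(h_i)\}$. Configurations are $(q,\langle S_1,\dots,S_m\rangle)$ with $S_i\subseteq D$ finite; initially state $q_0$ and all sets are empty. On reading $(a,d)$, a transition $(q,a,\alpha,op,q')$ from the current state may be taken if $\alpha=p(h_i)$ and $d\in S_i$, or $\alpha=\,!p(h_i)$ and $d\notin S_i$; then the state becomes $q'$ and if $op=\mathsf{ins}(h_j)$ the value $d$ is added to $S_j$ ($op=-$ changes nothing). A word is accepted if some run reads it entirely and ends in $F$. *)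

theory Defs
  imports Main
begin

text \<open>Data values: D is modelled by the countably infinite type nat.
  States are natural numbers from a finite set; the sets h_1..h_m are
  indexed by 0..m-1.\<close>

type_synonym dletter = "nat \<times> nat"   (* (symbol, data value) *)

datatype cnd = Mem nat | NotMem nat
datatype opr = NoOp | Ins nat

fun cnd_idx :: "cnd \<Rightarrow> nat" where
  "cnd_idx (Mem i) = i" | "cnd_idx (NotMem i) = i"

fun opr_ok :: "nat \<Rightarrow> opr \<Rightarrow> bool" where
  "opr_ok m NoOp = True" | "opr_ok m (Ins j) = (j < m)"

record safa =
  states :: "nat set"
  alph :: "nat set"
  init :: nat
  final :: "nat set"
  nsets :: nat
  trans :: "(nat \<times> nat \<times> cnd \<times> opr \<times> nat) set"

definition wf_safa :: "safa \<Rightarrow> bool" where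
  "wf_safa M \<longleftrightarrow> finite (states M) \<and> finite (alph M) \<and> init M \<in> states M
     \<and> final M \<subseteq> states M
     \<and> (\<forall>(q,a,c,op,q') \<in> trans M. q \<in> states M \<and> a \<in> alph M \<and> cnd_idx c < nsets M
           \<and> opr_ok (nsets M) op \<and> q' \<in> states M)"

fun sat :: "cnd \<Rightarrow> (nat \<Rightarrow> nat set) \<Rightarrow> nat \<Rightarrow> bool" where
  "sat (Mem i) S d = (d \<in> S i)"
| "sat (NotMem i) S d = (d \<notin> S i)"

fun upd :: "opr \<Rightarrow> (nat \<Rightarrow> nat set) \<Rightarrow> nat \<Rightarrow> (nat \<Rightarrow> nat set)" where
  "upd NoOp S d = S"
| "upd (Ins j) S d = S(j := insert d (S j))"

definition step :: "safa \<Rightarrow> nat \<times> (nat \<Rightarrow> nat set) \<Rightarrow> dletter \<Rightarrow> nat \<times> (nat \<Rightarrow> nat set) \<Rightarrow> bool" where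
  "step M cf x cf' \<longleftrightarrow> (\<exists>c op. (fst cf, fst x, c, op, fst cf') \<in> trans M
        \<and> sat c (snd cf) (snd x) \<and> snd cf' = upd op (snd cf) (snd x))"

inductive reach :: "safa \<Rightarrow> nat \<times> (nat \<Rightarrow> nat set) \<Rightarrow> dletter list \<Rightarrow> nat \<times> (nat \<Rightarrow> nat set) \<Rightarrow> bool"
  for M where
  reach_nil: "reach M cf [] cf"
| reach_cons: "step M cf x cf' \<Longrightarrow> reach M cf' w cf'' \<Longrightarrow> reach M cf (x # w) cf''"

definition lang :: "safa \<Rightarrow> dletter list set" where
  "lang M = {w. \<exists>q S. reach M (init M, \<lambda>_. {}) w (q, S) \<and> q \<in> final M}"

definition hom_ext :: "(dletter \<Rightarrow> dletter list) \<Rightarrow> dletter list \<Rightarrow> dletter list" where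
  "hom_ext h w = concat (map h w)"

end

theory Submission
  imports Defs
begin

definition M0 :: safa where
  "M0 = \<lparr>states = {0,1}, alph = {0}, init = 0, final = {1}, nsets = 1,
         trans = {(0,0,NotMem 0,NoOp,1)}\<rparr>"

definition h0 :: "dletter \<Rightarrow> dletter list" where
  "h0 x = (if snd x = 0 then [(0,0)] else [])"

lemma wf_M0: "wf_safa M0"
  by (auto simp: wf_safa_def M0_def)

lemma reach_from1: "reach M0 cf w cf' \<Longrightarrow> fst cf = 1 \<Longrightarrow> w = []"
  by (induction rule: reach.induct) (auto simp: step_def M0_def)

lemma lang_M0: "lang M0 = {[(0,d)] | d. True}"
proof (intro set_eqI iffI)
  fix w :: "dletter list" assume "w \<in> lang M0"
  then obtain q S where r: "reach M0 (0, \<lambda>_. {}) w (q, S)" and q: "q = 1"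
    by (auto simp: lang_def M0_def)
  have "\<exists>d. w = [(0, d)]"
  proof (cases w)
    case Nil then show ?thesis using r q by (auto elim: reach.cases)
  next
    case (Cons x w')
    with r obtain cf1 where s: "step M0 (0, \<lambda>_. {}) x cf1" and r2: "reach M0 cf1 w' (q,S)"
      by (auto elim: reach.cases)
    from s have "fst x = 0" "fst cf1 = 1" by (auto simp: step_def M0_def)
    with r2 have "w' = []" using reach_from1 by blast
    then show ?thesis using Cons \<open>fst x = 0\<close> by (cases x) auto
  qed
  then show "w \<in> {[(0,d)] | d. True}" by auto
next
  fix w :: "dletter list" assume "w \<in> {[(0::nat,d)] | d. True}"
  then obtain d where wd: "w = [(0,d)]" by auto
  have "step M0 (0, \<lambda>_. {}) (0,d) (1, \<lambda>_. {})"
    by (auto simp: step_def M0_def)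
  then have "reach M0 (0, \<lambda>_. {}) [(0,d)] (1, \<lambda>_. {})"
    by (auto intro: reach.intros)
  then show "w \<in> lang M0" unfolding wd by (auto simp: lang_def M0_def)
qed

lemma single_invariant:
  assumes "[(a,0)] \<in> lang M" shows "[(a,1)] \<in> lang M"
proof -
  from assms obtain q S where r: "reach M (init M, \<lambda>_. {}) [(a,0)] (q, S)" and q: "q \<in> final M"
    by (auto simp: lang_def)
  from r obtain cf1 where s: "step M (init M, \<lambda>_. {}) (a,0) cf1" and r2: "reach M cf1 [] (q,S)"
    by (auto elim: reach.cases)
  from r2 have cf1: "cf1 = (q,S)" by (auto elim: reach.cases)
  from s cf1 obtain c op where t: "(init M, a, c, op, q) \<in> trans M"
    and sc: "sat c (\<lambda>_. {}) 0" by (auto simp: step_def)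
  have sc1: "sat c (\<lambda>_. {}) 1" using sc by (cases c) auto
  have "step M (init M, \<lambda>_. {}) (a,1) (q, upd op (\<lambda>_. {}) 1)"
    using t sc1 by (auto simp: step_def)
  then have "reach M (init M, \<lambda>_. {}) [(a,1)] (q, upd op (\<lambda>_. {}) 1)"
    by (auto intro: reach.intros)
  then show ?thesis using q by (auto simp: lang_def)
qed

theorem theorem10:
  shows "\<exists>(Sigma :: nat set) (L :: dletter list set) (h :: dletter \<Rightarrow> dletter list) M.
     finite Sigma \<and> wf_safa M \<and> alph M = Sigma \<and> lang M = L
     \<and> (\<forall>x \<in> Sigma \<times> UNIV. set (h x) \<subseteq> Sigma \<times> UNIV)
     \<and> \<not> (\<exists>M'. wf_safa M' \<and> alph M' = Sigma
            \<and> lang M' = {w \<in> lists (Sigma \<times> UNIV). hom_ext h w \<in> L})"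
proof (intro exI conjI)
  show "finite {0::nat}" by simp
  show "wf_safa M0" by (rule wf_M0)
  show "alph M0 = {0}" by (simp add: M0_def)
  show "lang M0 = lang M0" ..
  show "\<forall>x\<in>{0::nat} \<times> UNIV. set (h0 x) \<subseteq> {0} \<times> UNIV" by (auto simp: h0_def)
  show "\<not> (\<exists>M'. wf_safa M' \<and> alph M' = {0}
            \<and> lang M' = {w \<in> lists ({0} \<times> UNIV). hom_ext h0 w \<in> lang M0})"
  proof
    assume "\<exists>M'. wf_safa M' \<and> alph M' = {0}
            \<and> lang M' = {w \<in> lists ({0} \<times> UNIV). hom_ext h0 w \<in> lang M0}"
    then obtain M' where e: "lang M' = {w \<in> lists ({0} \<times> UNIV). hom_ext h0 w \<in> lang M0}" by blast
    have "[(0,0)] \<in> lang M'" unfolding e lang_M0 by (auto simp: hom_ext_def h0_def)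
    then have "[(0,1)] \<in> lang M'" by (rule single_invariant)
    then show False unfolding e lang_M0 by (auto simp: hom_ext_def h0_def)
  qed
qed

end
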